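(* Let $\ell\ge2$ and $t\ge0$ be integers, $C\subseteq\mathbb{F}_q^n$ a linear code and $A,B\subseteq\mathbb{F}_q^n$ linear codes with $A*B\subseteq C^\perp$, $\dim A>t$, $\mathrm{d}(A^\perp)>t$ and $\mathrm{d}(A)+\mathrm{d}(C)>n$. Let $\mathbf{y}=\mathbf{c}+\mathbf{e}$ with $\mathbf{c}\in C$, $\mathrm{w}(\mathbf{e})=t$, $I_{\mathbf{e}}=\mathrm{supp}(\mathbf{e})$. Let $M_1=\{\mathbf{a}\in A\mid \langle \mathbf{a}*\mathbf{y},\mathbf{b}\rangle=0\ \forall \mathbf{b}\in B\}$, and for $i=2,\dots,\ell$, $M_i=\{\mathbf{a}\in A\mid \langle \mathbf{a}*\mathbf{y}^i,\mathbf{v}\rangle=0\ \forall \mathbf{v}\in (B^{\perp}*C^{i-1})^{\perp}\}$, and $M=\bigcap_{i=1}^\ell M_i$. If $A(I_{\mathbf{e}})=M$, then $$\dim B+\sum_{i=2}^{\ell}\dim (B^\perp*C^{i-1})^\perp\ge t.$$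
   Context: All codes are $\mathbb{F}_q$-linear subspaces of $\mathbb{F}_q^n$. $\mathbf{u}*\mathbf{v}=(u_1v_1,\dots,u_nv_n)$, $\mathbf{u}^i=(u_1^i,\dots,u_n^i)$; $A*B$ is the span of all $\mathbf{a}*\mathbf{b}$; $C^1=C$, $C^i=C*C^{i-1}$. $\langle\mathbf{u},\mathbf{v}\rangle=\sum_iu_iv_i$, $X^\perp$ the dual. $\mathrm{w}$ Hamming weight, $\mathrm{d}$ minimum distance, $\mathrm{supp}(\mathbf{x})=\{i:x_i\ne0\}$. $A(J)=\{\mathbf{a}\in A: a_j=0\ \forall j\in J\}\subseteq\mathbb{F}_q^n$. *)

theory Defs
  imports Main "HOL-Library.Function_Algebras" "HOL-Library.Extended_Nat"
begin

text \<open>Vectors of \<open>F_q^n\<close> are functions \<open>'n \<Rightarrow> 'a\<close> with \<open>'n\<close> a finite index type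
  (so \<open>n = CARD('n)\<close>) and \<open>'a\<close> a finite field. Addition and the componentwise
  (Schur) product \<open>u * v\<close> and powers \<open>u ^ i\<close> are the pointwise operations from
  Function_Algebras.\<close>

definition cscale :: "'a::field \<Rightarrow> ('n \<Rightarrow> 'a) \<Rightarrow> ('n \<Rightarrow> 'a)" where
  "cscale c v = (\<lambda>i. c * v i)"

interpretation fv: vector_space "cscale :: 'a::field \<Rightarrow> ('n \<Rightarrow> 'a) \<Rightarrow> ('n \<Rightarrow> 'a)"
  by unfold_locales (auto simp: cscale_def fun_eq_iff algebra_simps)

abbreviation linear_code :: "('n \<Rightarrow> 'a::field) set \<Rightarrow> bool" where
  "linear_code X \<equiv> fv.subspace X"

definition star :: "('n \<Rightarrow> 'a::field) set \<Rightarrow> ('n \<Rightarrow> 'a) set \<Rightarrow> ('n \<Rightarrow> 'a) set" where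
  "star A B = fv.span {a * b | a b. a \<in> A \<and> b \<in> B}"

text \<open>\<open>code_pow C i = C^i\<close> for \<open>i \<ge> 1\<close>: \<open>C^1 = C\<close>, \<open>C^i = C * C^(i-1)\<close>.
  The value at 0 (span of the all-one vector) is never used.\<close>
fun code_pow :: "('n \<Rightarrow> 'a::field) set \<Rightarrow> nat \<Rightarrow> ('n \<Rightarrow> 'a) set" where
  "code_pow C 0 = fv.span {1}"
| "code_pow C (Suc 0) = C"
| "code_pow C (Suc (Suc k)) = star C (code_pow C (Suc k))"

definition inner_prod :: "('n::finite \<Rightarrow> 'a::field) \<Rightarrow> ('n \<Rightarrow> 'a) \<Rightarrow> 'a" where
  "inner_prod u v = (\<Sum>i\<in>UNIV. u i * v i)"

definition dual :: "('n::finite \<Rightarrow> 'a::field) set \<Rightarrow> ('n \<Rightarrow> 'a) set" where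
  "dual X = {v. \<forall>x\<in>X. inner_prod x v = 0}"

definition supp :: "('n \<Rightarrow> 'a::zero) \<Rightarrow> 'n set" where
  "supp x = {i. x i \<noteq> 0}"

definition hweight :: "('n::finite \<Rightarrow> 'a::zero) \<Rightarrow> nat" where
  "hweight x = card (supp x)"

text \<open>Minimum distance, with the convention \<open>d({0}) = \<infinity>\<close>.\<close>
definition min_dist :: "('n::finite \<Rightarrow> 'a::zero) set \<Rightarrow> enat" where
  "min_dist X = Inf {enat (hweight x) | x. x \<in> X \<and> x \<noteq> 0}"

definition shortened :: "('n \<Rightarrow> 'a::zero) set \<Rightarrow> 'n set \<Rightarrow> ('n \<Rightarrow> 'a) set" where
  "shortened A J = {a \<in> A. \<forall>j\<in>J. a j = 0}"

end

theory Submission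
  imports Defs
begin

definition fvB :: "('n::finite \<Rightarrow> 'a::{field,finite}) set" where
  "fvB = (SOME B. fv.independent B \<and> fv.span B = UNIV)"

lemma fvB_props:
  "fv.independent (fvB :: ('n::finite \<Rightarrow> 'a::{field,finite}) set) \<and> fv.span (fvB :: ('n \<Rightarrow> 'a) set) = UNIV"
proof -
  obtain B :: "('n \<Rightarrow> 'a) set" where "fv.independent B" "UNIV \<subseteq> fv.span B"
    using fv.basis_exists[of UNIV] by metis
  then have "\<exists>B :: ('n \<Rightarrow> 'a) set. fv.independent B \<and> fv.span B = UNIV" by auto
  then show ?thesis unfolding fvB_def by (rule someI_ex)
qed

interpretation fvd: finite_dimensional_vector_space
  "cscale :: 'a::{field,finite} \<Rightarrow> ('n::finite \<Rightarrow> 'a) \<Rightarrow> ('n \<Rightarrow> 'a)" fvB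
  by unfold_locales (auto simp: fvB_props)

interpretation fvp: finite_dimensional_vector_space_pair_1
  "cscale :: 'a::{field,finite} \<Rightarrow> ('n::finite \<Rightarrow> 'a) \<Rightarrow> ('n \<Rightarrow> 'a)" fvB
  "cscale :: 'a::{field,finite} \<Rightarrow> ('n::finite \<Rightarrow> 'a) \<Rightarrow> ('n \<Rightarrow> 'a)"
  by unfold_locales

lemma rank_nullity:
  fixes f :: "('n::finite \<Rightarrow> 'a::{field,finite}) \<Rightarrow> ('n \<Rightarrow> 'a)"
    and S :: "('n \<Rightarrow> 'a) set"
  assumes lin: "Vector_Spaces.linear cscale cscale f" and S: "fv.subspace S"
  shows "fv.dim S = fv.dim {x\<in>S. f x = 0} + fv.dim (f ` S)"
proof -
  define N where "N = {x\<in>S. f x = 0}"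
  obtain K where K: "K \<subseteq> N" "fv.independent K" "N \<subseteq> fv.span K" "card K = fv.dim N"
    using fv.basis_exists[of N] by metis
  have "K \<subseteq> S" using K(1) N_def by auto
  then obtain Bs where Bs: "K \<subseteq> Bs" "Bs \<subseteq> S" "fv.independent Bs" "S \<subseteq> fv.span Bs"
    using fv.maximal_independent_subset_extend[OF _ K(2)] by metis
  define R where "R = Bs - K"
  have finB: "finite Bs" by (rule finite_subset[OF subset_UNIV finite_UNIV])
  have cardBs: "card Bs = fv.dim S" using fv.basis_card_eq_dim[OF Bs(2,4,3)] .
  have finK: "finite K" by (rule finite_subset[OF subset_UNIV finite_UNIV])
  have cardsum: "card Bs = card K + card R"
    unfolding R_def using card_Diff_subset[OF finK Bs(1)] card_mono[OF finB Bs(1)] by simp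
  have indR: "fv.independent R" using Bs(3) unfolding R_def by (rule fv.independent_mono) blast
  have spanS: "fv.span Bs = S" using fv.span_minimal[OF Bs(2) S] Bs(4) by (rule subset_antisym)
  have dimspans: "fv.dim (fv.span K) + fv.dim (fv.span R) = card Bs"
    using cardsum fv.dim_span_eq_card_independent[OF K(2)] fv.dim_span_eq_card_independent[OF indR] by simp
  have "fv.dim {x + y |x y. x \<in> fv.span K \<and> y \<in> fv.span R} + fv.dim (fv.span K \<inter> fv.span R)
     = fv.dim (fv.span K) + fv.dim (fv.span R)"
    by (rule fvd.dim_sums_Int[OF fv.subspace_span fv.subspace_span])
  moreover have "{x + y |x y. x \<in> fv.span K \<and> y \<in> fv.span R} = S"
  proof -
    have "Bs = K \<union> R" using R_def Bs(1) by auto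
    then show ?thesis using fv.span_Un[of K R] spanS by simp
  qed
  ultimately have "fv.dim (fv.span K \<inter> fv.span R) = 0"
    using dimspans cardBs by simp
  then have int0: "fv.span K \<inter> fv.span R \<subseteq> {0}" by (simp only: fvd.dim_eq_0)
  interpret lf: Vector_Spaces.linear cscale cscale f by fact
  have RB: "R \<subseteq> Bs" unfolding R_def by (rule Diff_subset)
  have RS: "fv.span R \<subseteq> S" using fv.span_mono[OF RB] spanS by simp
  have inj: "inj_on f (fv.span R)"
  proof (rule inj_onI)
    fix x y assume xy: "x \<in> fv.span R" "y \<in> fv.span R" "f x = f y"
    have d: "x - y \<in> fv.span R" using xy fv.span_diff by blast
    have "f (x - y) = 0" using xy lf.diff by simp
    then have "x - y \<in> N" using d RS N_def by auto
    then have "x - y \<in> fv.span K" using K(3) by blast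
    then show "x = y" using d int0 by auto
  qed
  have dR: "fv.dim (f ` R) = card R"
    using fvp.dim_image_eq[OF lin inj] fv.dim_eq_card_independent[OF indR] by simp
  have fS: "f ` S = fv.span (f ` Bs)" using spanS lf.span_image[of Bs] by simp
  have fK: "f ` K \<subseteq> {0}" using K(1) N_def by auto
  have s1: "f ` Bs \<subseteq> fv.span (f ` R)"
  proof
      fix z assume "z \<in> f ` Bs"
      then obtain b where b: "b \<in> Bs" "z = f b" by auto
      show "z \<in> fv.span (f ` R)"
      proof (cases "b \<in> K")
        case True then have "z = 0" using fK b by auto
        then show ?thesis using fv.span_zero by simp
      next
        case False then have "b \<in> R" using b R_def by simp
        then have "z \<in> f ` R" using b by simp
        then show ?thesis by (rule fv.span_base)
      qed
    qed
  have "f ` R \<subseteq> f ` Bs" using RB by (rule image_mono)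
  then have s2: "f ` R \<subseteq> fv.span (f ` Bs)" using fv.span_superset[of "f ` Bs"] by (rule subset_trans)
  have "fv.span (f ` Bs) = fv.span (f ` R)" using s1 s2 by (simp only: fv.span_eq)
  then have "fv.dim (f ` S) = fv.dim (f ` R)" using fS fv.dim_span by simp
  then have "fv.dim (f ` S) = card R" using dR by simp
  then show ?thesis using cardBs cardsum K(4) N_def by simp
qed

lemma inner_prod_comm: "inner_prod u v = inner_prod v u"
  unfolding inner_prod_def by (simp add: mult.commute)

lemma inner_prod_add2: "inner_prod u (v + w) = inner_prod u v + inner_prod u w"
  unfolding inner_prod_def by (simp add: distrib_left sum.distrib)

lemma inner_prod_scale2: "inner_prod u (cscale c v) = c * inner_prod u v"
  unfolding inner_prod_def cscale_def by (simp add: sum_distrib_left algebra_simps)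

lemma inner_prod_add1: "inner_prod (v + w) u = inner_prod v u + inner_prod w u"
  using inner_prod_add2 inner_prod_comm by metis

lemma inner_prod_scale1: "inner_prod (cscale c v) u = c * inner_prod v u"
  using inner_prod_scale2 inner_prod_comm by metis

lemma inner_prod_scale1': "inner_prod (\<lambda>i. c * v i) u = c * inner_prod v u"
  using inner_prod_scale1[of c v u] unfolding cscale_def .

lemma inner_prod_zero2: "inner_prod u 0 = 0"
  unfolding inner_prod_def by simp

lemma inner_prod_times: "inner_prod x (a * z) = inner_prod (z * x) a"
  unfolding inner_prod_def by (simp add: algebra_simps)

lemma subspace_dual: "fv.subspace (dual X)"
  unfolding fv.subspace_def dual_def
  by (auto simp: inner_prod_zero2 inner_prod_add2 inner_prod_scale2)

lemma dual_span: "dual (fv.span G) = dual G"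
proof
  show "dual (fv.span G) \<subseteq> dual G" using fv.span_superset unfolding dual_def by blast
next
  show "dual G \<subseteq> dual (fv.span G)"
  proof
    fix v assume v: "v \<in> dual G"
    have "G \<subseteq> dual {v}" using v unfolding dual_def by (auto simp: inner_prod_comm)
    then have "fv.span G \<subseteq> dual {v}" using fv.span_minimal subspace_dual by blast
    then show "v \<in> dual (fv.span G)" unfolding dual_def by (auto simp: inner_prod_comm)
  qed
qed

lemma hyperplane_dim:
  fixes X :: "('n::finite \<Rightarrow> 'a::{field,finite}) set"
  assumes X: "fv.subspace X"
  shows "fv.dim X \<le> fv.dim (X \<inter> dual {w}) + 1"
proof -
  define f where "f = (\<lambda>x::'n \<Rightarrow> 'a. cscale (inner_prod x w) (1 :: 'n \<Rightarrow> 'a))"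
  have lin: "Vector_Spaces.linear cscale cscale f"
    unfolding Vector_Spaces.linear_iff f_def
    by (auto simp: fv.vector_space_axioms inner_prod_add1 inner_prod_scale1' cscale_def fun_eq_iff algebra_simps)
  have ker: "{x\<in>X. f x = 0} = X \<inter> dual {w}"
    unfolding f_def dual_def cscale_def by (auto simp: fun_eq_iff inner_prod_comm)
  have "f ` X \<subseteq> fv.span {1}"
    unfolding f_def using fv.span_scale fv.span_base by blast
  then have "fv.dim (f ` X) \<le> fv.dim {1 :: 'n \<Rightarrow> 'a}" using fvd.dim_mono by blast
  also have "\<dots> \<le> 1" using fv.dim_le_card'[of "{1 :: 'n \<Rightarrow> 'a}"] by simp
  finally show ?thesis using rank_nullity[OF lin X] ker by simp
qed

lemma dual_fin_dim:
  fixes X :: "('n::finite \<Rightarrow> 'a::{field,finite}) set"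
  assumes "finite F"
  shows "fv.subspace X \<Longrightarrow> fv.dim X \<le> fv.dim (X \<inter> dual F) + card F"
  using assms(1)
proof (induction F rule: finite_induct)
  case empty
  then show ?case by (simp add: dual_def)
next
  case (insert w F)
  have eq: "X \<inter> dual (insert w F) = (X \<inter> dual F) \<inter> dual {w}"
    unfolding dual_def by auto
  have "fv.subspace (X \<inter> dual F)" using insert.prems subspace_dual fv.subspace_inter by blast
  then have "fv.dim (X \<inter> dual F) \<le> fv.dim (X \<inter> dual (insert w F)) + 1"
    using hyperplane_dim eq by metis
  then show ?case using insert by simp
qed

lemma sum_fun_app: "(\<Sum>v\<in>D. (g v :: 'n \<Rightarrow> 'b::comm_monoid_add)) j = (\<Sum>v\<in>D. g v j)"
  by (induction D rule: infinite_finite_induct) auto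

definition delta :: "'n \<Rightarrow> 'n \<Rightarrow> 'a::field" where
  "delta k = (\<lambda>i. if i = k then 1 else 0)"

lemma inj_delta: "inj (delta :: 'n \<Rightarrow> 'n \<Rightarrow> 'a::field)"
  by (rule injI) (metis delta_def one_neq_zero)

lemma dim_supp_space:
  fixes I :: "'n::finite set"
  shows "fv.dim {x :: 'n \<Rightarrow> 'a::{field,finite}. \<forall>j. j \<notin> I \<longrightarrow> x j = 0} = card I"
proof -
  define E where "E = {x :: 'n \<Rightarrow> 'a. \<forall>j. j \<notin> I \<longrightarrow> x j = 0}"
  define D where "D = (delta :: 'n \<Rightarrow> 'n \<Rightarrow> 'a) ` I"
  have finD: "finite D" by (rule finite_subset[OF subset_UNIV finite_UNIV])
  have injI: "inj_on (delta :: 'n \<Rightarrow> 'n \<Rightarrow> 'a) I" using inj_delta by (metis inj_on_subset subset_UNIV)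
  have cardD: "card D = card I" unfolding D_def using card_image[OF injI] .
  have DE: "D \<subseteq> E" unfolding D_def E_def delta_def by auto
  have ev: "(\<Sum>k\<in>I. cscale (c k) (delta k :: 'n \<Rightarrow> 'a)) j = (if j \<in> I then c j else 0)" for c j
  proof -
    have "(\<Sum>k\<in>I. cscale (c k) (delta k :: 'n \<Rightarrow> 'a)) j = (\<Sum>k\<in>I. (if j = k then c k else 0))"
      unfolding sum_fun_app cscale_def delta_def by (rule sum.cong) auto
    also have "\<dots> = (if j \<in> I then c j else 0)"
      using sum.delta[of I j c] by simp
    finally show ?thesis .
  qed
  have ind: "fv.independent D"
    unfolding fvd.independent_explicit
  proof (intro conjI allI impI ballI)
    show "finite D" by fact
    fix c v assume h: "(\<Sum>v\<in>D. cscale (c v) v) = 0" and v: "v \<in> D"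
    obtain j where j: "j \<in> I" "v = delta j" using v D_def by auto
    have "(\<Sum>v\<in>D. cscale (c v) v) = (\<Sum>k\<in>I. cscale (c (delta k)) (delta k :: 'n \<Rightarrow> 'a))"
      unfolding D_def by (rule sum.reindex_cong[OF injI refl]) simp
    then have "(\<Sum>k\<in>I. cscale (c (delta k)) (delta k :: 'n \<Rightarrow> 'a)) j = 0" using h by simp
    then show "c v = 0" using ev[of "\<lambda>k. c (delta k)" j] j by simp
  qed
  have sp: "E \<subseteq> fv.span D"
  proof
    fix x assume x: "x \<in> E"
    have "x = (\<Sum>k\<in>I. cscale (x k) (delta k :: 'n \<Rightarrow> 'a))"
      using x ev[of x] unfolding E_def by (auto simp: fun_eq_iff)
    moreover have "(\<Sum>k\<in>I. cscale (x k) (delta k :: 'n \<Rightarrow> 'a)) \<in> fv.span D"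
      by (rule fv.span_sum, rule fv.span_scale, rule fv.span_base) (simp add: D_def)
    ultimately show "x \<in> fv.span D" by simp
  qed
  show ?thesis using fv.dim_unique[OF DE sp ind cardD] unfolding E_def .
qed

theorem theorem3p10:
  fixes A B C :: "('n::finite \<Rightarrow> 'a::{field,finite}) set"
    and y c e :: "'n \<Rightarrow> 'a"
    and l t :: nat
  assumes "l \<ge> 2"
    and "linear_code C" and "linear_code A" and "linear_code B"
    and "star A B \<subseteq> dual C"
    and "fv.dim A > t"
    and "min_dist (dual A) > enat t"
    and "min_dist A + min_dist C > enat (card (UNIV :: 'n set))"
    and "y = c + e" and "c \<in> C" and "hweight e = t"
  defines "M \<equiv> {a \<in> A. \<forall>b\<in>B. inner_prod (a * y) b = 0}
              \<inter> (\<Inter>i\<in>{2..l}. {a \<in> A. \<forall>v\<in>dual (star (dual B) (code_pow C (i - 1))).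
                                       inner_prod (a * y ^ i) v = 0})"
  assumes "shortened A (supp e) = M"
  shows "fv.dim B + (\<Sum>i=2..l. fv.dim (dual (star (dual B) (code_pow C (i - 1))))) \<ge> t"
proof -
  note Asub = assms(3)
  note mdA = assms(7)
  define I where "I = supp e"
  have cardI: "card I = t" using assms(11) unfolding I_def hweight_def .
  define P where "P = (\<lambda>x::'n \<Rightarrow> 'a. (\<lambda>j. if j \<in> I then x j else 0))"
  have linP: "Vector_Spaces.linear cscale cscale P"
    unfolding Vector_Spaces.linear_iff P_def
    by (auto simp: fv.vector_space_axioms cscale_def fun_eq_iff)
  have kerP: "{x\<in>A. P x = 0} = shortened A I"
    unfolding shortened_def P_def by (auto simp: fun_eq_iff)
  have rn: "fv.dim A = fv.dim (shortened A I) + fv.dim (P ` A)"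
    using rank_nullity[OF linP Asub] kerP by simp
  define E where "E = {x :: 'n \<Rightarrow> 'a. \<forall>j. j \<notin> I \<longrightarrow> x j = 0}"
  have dimE: "fv.dim E = t" using dim_supp_space[of I] cardI unfolding E_def by simp
  have subE: "fv.subspace E" unfolding fv.subspace_def E_def by (auto simp: cscale_def)
  have PA: "fv.dim (P ` A) \<ge> t"
  proof (rule ccontr)
    assume lt: "\<not> fv.dim (P ` A) \<ge> t"
    obtain G where G: "G \<subseteq> P ` A" "fv.independent G" "P ` A \<subseteq> fv.span G" "card G = fv.dim (P ` A)"
      by (rule fv.basis_exists[of "P ` A"])
    have finG: "finite G" by (rule finite_subset[OF subset_UNIV finite_UNIV])
    have "fv.dim E \<le> fv.dim (E \<inter> dual G) + card G" using dual_fin_dim[OF finG subE] .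
    then have "fv.dim (E \<inter> dual G) \<noteq> 0" using lt G(4) dimE by linarith
    then have "\<not> (E \<inter> dual G \<subseteq> {0})" by (metis fvd.dim_eq_0)
    then obtain w where "w \<in> E \<inter> dual G" "w \<notin> {0}" by (meson subsetI)
    then have w: "w \<in> E" "w \<in> dual G" "w \<noteq> 0" by simp_all
    have wA: "w \<in> dual A"
      unfolding dual_def
    proof (intro CollectI ballI)
      fix a assume a: "a \<in> A"
      have "P a \<in> fv.span G" using G(3) a by blast
      moreover have "w \<in> dual (fv.span G)" using w(2) dual_span[of G] by simp
      ultimately have "inner_prod (P a) w = 0" unfolding dual_def by blast
      moreover have "inner_prod a w = inner_prod (P a) w"
        unfolding inner_prod_def P_def by (rule sum.cong) (use w(1) E_def in auto)
      ultimately show "inner_prod a w = 0" by simp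
    qed
    have "supp w \<subseteq> I" using w(1) unfolding E_def supp_def by auto
    then have "card (supp w) \<le> card I" by (rule card_mono[OF finite_subset[OF subset_UNIV finite_UNIV]])
    then have hw: "enat (hweight w) \<le> enat t" unfolding hweight_def using cardI by simp
    have "min_dist (dual A) \<le> enat (hweight w)"
      unfolding min_dist_def by (rule Inf_lower) (use wA w(3) in blast)
    then have "min_dist (dual A) \<le> enat t" using hw by (rule order_trans)
    then show False using mdA by simp
  qed
  define D where "D = (\<lambda>i. dual (star (dual B) (code_pow C (i - 1))))"
  obtain Bb where Bb: "Bb \<subseteq> B" "fv.independent Bb" "B \<subseteq> fv.span Bb" "card Bb = fv.dim B"
    by (rule fv.basis_exists[of B])
  have "\<forall>i. \<exists>G. G \<subseteq> D i \<and> D i \<subseteq> fv.span G \<and> card G = fv.dim (D i)"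
  proof
    fix i
    obtain G where "G \<subseteq> D i" "fv.independent G" "D i \<subseteq> fv.span G" "card G = fv.dim (D i)"
      using fv.basis_exists[of "D i"] by blast
    then show "\<exists>G. G \<subseteq> D i \<and> D i \<subseteq> fv.span G \<and> card G = fv.dim (D i)" by blast
  qed
  then have "\<exists>Di. \<forall>i. Di i \<subseteq> D i \<and> D i \<subseteq> fv.span (Di i) \<and> card (Di i) = fv.dim (D i)"
    by (rule choice)
  then obtain Di where Di0: "\<forall>i. Di i \<subseteq> D i \<and> D i \<subseteq> fv.span (Di i) \<and> card (Di i) = fv.dim (D i)"
    by (rule exE)
  have Di: "\<And>i. Di i \<subseteq> D i" "\<And>i. D i \<subseteq> fv.span (Di i)" "\<And>i. card (Di i) = fv.dim (D i)"
    using Di0 by auto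
  define F where "F = (\<lambda>b. y * b) ` Bb \<union> (\<Union>i\<in>{2..l}. (\<lambda>v. y ^ i * v) ` Di i)"
  have finF: "finite F" by (rule finite_subset[OF subset_UNIV finite_UNIV])
  have cardF: "card F \<le> fv.dim B + (\<Sum>i=2..l. fv.dim (D i))"
  proof -
    have "card F \<le> card ((\<lambda>b. y * b) ` Bb) + card (\<Union>i\<in>{2..l}. (\<lambda>v. y ^ i * v) ` Di i)"
      unfolding F_def by (rule card_Un_le)
    also have "card ((\<lambda>b. y * b) ` Bb) \<le> fv.dim B"
      using card_image_le[OF finite_subset[OF subset_UNIV finite_UNIV], where A=Bb and f="\<lambda>b. y * b"] Bb(4) by simp
    also have "card (\<Union>i\<in>{2..l}. (\<lambda>v. y ^ i * v) ` Di i) \<le> (\<Sum>i=2..l. card ((\<lambda>v. y ^ i * v) ` Di i))"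
      by (rule card_UN_le) simp
    also have "\<dots> \<le> (\<Sum>i=2..l. fv.dim (D i))"
    proof (rule sum_mono)
      fix i show "card ((\<lambda>v. y ^ i * v) ` Di i) \<le> fv.dim (D i)"
        using card_image_le[OF finite_subset[OF subset_UNIV finite_UNIV], where A="Di i" and f="\<lambda>v. y ^ i * v"] Di(3)[of i] by simp
    qed
    finally show ?thesis by simp
  qed
  have AF: "A \<inter> dual F \<subseteq> M"
  proof
    fix a assume a: "a \<in> A \<inter> dual F"
    have h1: "\<forall>b\<in>B. inner_prod (a * y) b = 0"
    proof
      fix b assume b: "b \<in> B"
      have "a * y \<in> dual Bb"
        unfolding dual_def
      proof (intro CollectI ballI)
        fix b' assume "b' \<in> Bb"
        then have "y * b' \<in> F" unfolding F_def by blast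
        then have "inner_prod (y * b') a = 0" using a unfolding dual_def by blast
        then show "inner_prod b' (a * y) = 0" by (simp add: inner_prod_times)
      qed
      then have "a * y \<in> dual (fv.span Bb)" using dual_span[of Bb] by simp
      then have "inner_prod b (a * y) = 0" using b Bb(3) unfolding dual_def by blast
      then show "inner_prod (a * y) b = 0" by (simp add: inner_prod_comm)
    qed
    have h2: "\<forall>v\<in>D i. inner_prod (a * y ^ i) v = 0" if i: "i \<in> {2..l}" for i
    proof
      fix b assume b: "b \<in> D i"
      have "a * y ^ i \<in> dual (Di i)"
        unfolding dual_def
      proof (intro CollectI ballI)
        fix b' assume "b' \<in> Di i"
        then have "y ^ i * b' \<in> F" unfolding F_def using i by blast
        then have "inner_prod (y ^ i * b') a = 0" using a unfolding dual_def by blast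
        then show "inner_prod b' (a * y ^ i) = 0" by (simp add: inner_prod_times)
      qed
      then have "a * y ^ i \<in> dual (fv.span (Di i))" using dual_span[of "Di i"] by simp
      then have "inner_prod b (a * y ^ i) = 0" using b Di(2)[of i] unfolding dual_def by blast
      then show "inner_prod (a * y ^ i) b = 0" by (simp add: inner_prod_comm)
    qed
    show "a \<in> M" unfolding M_def using a h1 h2 unfolding D_def by blast
  qed
  have "fv.dim A \<le> fv.dim (A \<inter> dual F) + card F" using dual_fin_dim[OF finF Asub] .
  also have "fv.dim (A \<inter> dual F) \<le> fv.dim M" using AF by (rule fvd.dim_subset)
  finally have "fv.dim A \<le> fv.dim M + card F" by simp
  moreover have "M = shortened A I" unfolding I_def using \<open>shortened A (supp e) = M\<close> by (rule sym)
  ultimately have "t \<le> card F" using rn PA by simp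
  then show ?thesis using cardF unfolding D_def by simp
qed

end
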